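(* Let $H$ be a complex separable Hilbert space and let $S,T\in B(H)$ be normal operators with Cartesian decompositions $S=A+iC$ and $T=B+iD$ ($A,B,C,D$ self-adjoint) such that $C$ and $D$ are positive. Then $$\|ST-TS\|\le \frac12\sqrt{4\|A\|^2+\|C\|^2}\,\sqrt{4\|B\|^2+\|D\|^2}.$$
   Context: $B(H)$ denotes the algebra of bounded linear operators on $H$ with the operator norm. The Cartesian decomposition of $S\in B(H)$ is $S=A+iC$ with $A=\frac{S+S^*}{2}$ and $C=\frac{S-S^*}{2i}$ self-adjoint. *)

theory Defs
  imports "HOL-Analysis.Analysis"
begin

text \<open>Complex Hilbert spaces (not available in the distribution): a complete
  normed space with a complex scalar multiplication (compatible with the real one)
  and a complex inner product, conjugate-linear in the first argument, inducing the norm.\<close>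

class chilbert = real_normed_vector + complete_space +
  fixes cscale :: "complex \<Rightarrow> 'a \<Rightarrow> 'a"
    and cinner :: "'a \<Rightarrow> 'a \<Rightarrow> complex"
  assumes cscale_add_right: "cscale a (x + y) = cscale a x + cscale a y"
    and cscale_add_left: "cscale (a + b) x = cscale a x + cscale b x"
    and cscale_cscale: "cscale a (cscale b x) = cscale (a * b) x"
    and cscale_one: "cscale 1 x = x"
    and scaleR_cscale: "scaleR r x = cscale (complex_of_real r) x"
    and cinner_commute: "cinner x y = cnj (cinner y x)"
    and cinner_add_left: "cinner (x + y) z = cinner x z + cinner y z"
    and cinner_cscale_left: "cinner (cscale c x) y = cnj c * cinner x y"
    and cinner_self_nonneg: "0 \<le> Re (cinner x x)"
    and cinner_self_eq_0: "cinner x x = 0 \<longleftrightarrow> x = 0"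
    and norm_eq_sqrt_cinner: "norm x = sqrt (Re (cinner x x))"

definition bounded_op :: "('a::chilbert \<Rightarrow> 'a) \<Rightarrow> bool" where
  "bounded_op S \<longleftrightarrow> (\<forall>x y. S (x + y) = S x + S y) \<and> (\<forall>c x. S (cscale c x) = cscale c (S x))
     \<and> (\<exists>K. \<forall>x. norm (S x) \<le> norm x * K)"

definition is_adjoint :: "('a::chilbert \<Rightarrow> 'a) \<Rightarrow> ('a \<Rightarrow> 'a) \<Rightarrow> bool" where
  "is_adjoint S S' \<longleftrightarrow> (\<forall>x y. cinner (S x) y = cinner x (S' y))"

definition selfadjoint_op :: "('a::chilbert \<Rightarrow> 'a) \<Rightarrow> bool" where
  "selfadjoint_op S \<longleftrightarrow> bounded_op S \<and> is_adjoint S S"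

definition normal_op :: "('a::chilbert \<Rightarrow> 'a) \<Rightarrow> bool" where
  "normal_op S \<longleftrightarrow> bounded_op S \<and> (\<exists>S'. is_adjoint S S' \<and> S \<circ> S' = S' \<circ> S)"

definition positive_op :: "('a::chilbert \<Rightarrow> 'a) \<Rightarrow> bool" where
  "positive_op C \<longleftrightarrow> selfadjoint_op C \<and> (\<forall>x. 0 \<le> Re (cinner (C x) x))"

definition separable_space :: "'a::metric_space itself \<Rightarrow> bool" where
  "separable_space _ \<longleftrightarrow> (\<exists>D::'a set. countable D \<and> closure D = UNIV)"

end

theory Submission
  imports Defs
begin

lemma cmod_module: "module (cscale :: complex \<Rightarrow> 'a::chilbert \<Rightarrow> 'a)"
  by unfold_locales (simp_all add: cscale_add_right cscale_add_left cscale_cscale cscale_one)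

interpretation cs: module "cscale :: complex \<Rightarrow> 'a::chilbert \<Rightarrow> 'a"
  by (rule cmod_module)

lemma cinner_add_right: "cinner x (y + z) = cinner x y + cinner x z"
  by (metis cinner_commute cinner_add_left complex_cnj_add)

lemma cinner_cscale_right: "cinner x (cscale c y) = c * cinner x y"
  by (metis cinner_commute cinner_cscale_left complex_cnj_cnj complex_cnj_mult)

lemma cinner_zero_left [simp]: "cinner 0 y = 0"
  using cinner_add_left[of 0 0 y] by simp

lemma cinner_zero_right [simp]: "cinner x 0 = 0"
  using cinner_add_right[of x 0 0] by simp

lemma cinner_minus_left: "cinner (- x) y = - cinner x y"
proof -
  have "cinner x y + cinner (-x) y = 0" using cinner_add_left[of x "-x" y] by simp
  then show ?thesis by (metis minus_unique)
qed

lemma cinner_minus_right: "cinner x (- y) = - cinner x y"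
proof -
  have "cinner x y + cinner x (-y) = 0" using cinner_add_right[of x y "-y"] by simp
  then show ?thesis by (metis minus_unique)
qed

lemma cinner_diff_left: "cinner (x - y) z = cinner x z - cinner y z"
  by (simp only: diff_conv_add_uminus cinner_add_left cinner_minus_left)

lemma cinner_diff_right: "cinner x (y - z) = cinner x y - cinner x z"
  by (simp only: diff_conv_add_uminus cinner_add_right cinner_minus_right)

lemma cinner_scaleR_left: "cinner (scaleR r x) y = of_real r * cinner x y"
  by (simp add: scaleR_cscale cinner_cscale_left)

lemma cinner_scaleR_right: "cinner x (scaleR r y) = of_real r * cinner x y"
  by (simp add: scaleR_cscale cinner_cscale_right)

lemma cinner_self_Im: "Im (cinner x x) = 0"
  by (metis cinner_commute cnj.sel(2) neg_equal_zero)

lemma norm_sq_cinner: "(norm x)\<^sup>2 = Re (cinner x x)"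
  by (simp add: norm_eq_sqrt_cinner cinner_self_nonneg)

lemma cinner_self: "cinner x x = complex_of_real ((norm x)\<^sup>2)"
  by (simp add: norm_sq_cinner complex_eq_iff cinner_self_Im)

lemma Re_cinner_commute: "Re (cinner y x) = Re (cinner x y)"
  by (subst cinner_commute) simp

lemma norm_sq_add_cscale:
  "(norm (u + cscale z v))\<^sup>2 = (norm u)\<^sup>2 + (cmod z)\<^sup>2 * (norm v)\<^sup>2 + 2 * Re (z * cinner u v)"
proof -
  have "cinner (u + cscale z v) (u + cscale z v)
      = cinner u u + cnj z * cinner v u + z * cinner u v + cnj z * z * cinner v v"
    by (simp add: cinner_add_left cinner_add_right cinner_cscale_left cinner_cscale_right
        algebra_simps)
  also have "cnj z * cinner v u = cnj (z * cinner u v)"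
    by (metis cinner_commute complex_cnj_mult)
  also have "cnj z * z = complex_of_real ((cmod z)\<^sup>2)"
    by (metis complex_norm_square mult.commute)
  finally have "Re (cinner (u + cscale z v) (u + cscale z v))
      = Re (cinner u u) + Re (cnj (z * cinner u v)) + Re (z * cinner u v) + Re (complex_of_real ((cmod z)\<^sup>2) * cinner v v)"
    by (simp only: plus_complex.sel)
  then show ?thesis unfolding norm_sq_cinner by simp
qed

lemma norm_sq_diff_scaleR:
  "(norm (u - scaleR r x))\<^sup>2 = (norm u)\<^sup>2 - 2 * r * Re (cinner u x) + r\<^sup>2 * (norm x)\<^sup>2"
proof -
  have "cinner (u - scaleR r x) (u - scaleR r x)
     = cinner u u - of_real r * cinner u x - of_real r * cinner x u + of_real r * of_real r * cinner x x"
    by (simp add: cinner_diff_left cinner_diff_right cinner_scaleR_left cinner_scaleR_right algebra_simps)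
  then have "Re (cinner (u - scaleR r x) (u - scaleR r x))
     = Re (cinner u u) - r * Re (cinner u x) - r * Re (cinner x u) + r * r * Re (cinner x x)"
    by simp
  moreover have "Re (cinner x u) = Re (cinner u x)" by (rule Re_cinner_commute)
  ultimately show ?thesis unfolding norm_sq_cinner by algebra
qed


lemma bop_add: "bounded_op S \<Longrightarrow> S (x + y) = S x + S y"
  by (simp add: bounded_op_def)

lemma bop_cscale: "bounded_op S \<Longrightarrow> S (cscale c x) = cscale c (S x)"
  by (simp add: bounded_op_def)

lemma bop_zero: "bounded_op S \<Longrightarrow> S 0 = 0"
  using bop_cscale[of S 0 0] by simp

lemma bop_minus: "bounded_op S \<Longrightarrow> S (- x) = - S x"
proof -
  assume b: "bounded_op S"
  have "S x + S (-x) = 0" using bop_add[OF b, of x "-x"] bop_zero[OF b] by simp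
  then show ?thesis by (metis minus_unique)
qed

lemma bop_diff: "bounded_op S \<Longrightarrow> S (x - y) = S x - S y"
  by (simp only: diff_conv_add_uminus bop_add bop_minus)

lemma bop_scaleR: "bounded_op S \<Longrightarrow> S (scaleR r x) = scaleR r (S x)"
  by (simp add: scaleR_cscale bop_cscale)

lemma bop_bl: "bounded_op S \<Longrightarrow> bounded_linear S"
proof -
  assume b: "bounded_op S"
  then obtain K where K: "\<forall>x. norm (S x) \<le> norm x * K" by (auto simp: bounded_op_def)
  show ?thesis
    by (rule bounded_linear_intro[of S K]) (use b K bop_add bop_scaleR in auto)
qed

lemma bop_onorm: "bounded_op S \<Longrightarrow> norm (S x) \<le> onorm S * norm x"
  by (rule onorm[OF bop_bl])

lemma bop_onorm_nonneg: "bounded_op S \<Longrightarrow> 0 \<le> onorm S"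
  by (rule onorm_pos_le[OF bop_bl])

lemma gen_cs:
  assumes C: "bounded_op C" and adj: "is_adjoint C C" and pos: "\<forall>x. 0 \<le> Re (cinner (C x) x)"
  shows "(cmod (cinner (C x) y))\<^sup>2 \<le> Re (cinner (C x) x) * Re (cinner (C y) y)"
proof -
  define w where "w = cinner (C x) y"
  define W where "W = (cmod w)\<^sup>2"
  define P where "P = Re (cinner (C x) x)"
  define Q where "Q = Re (cinner (C y) y)"
  have P0: "0 \<le> P" and Q0: "0 \<le> Q" using pos by (auto simp: P_def Q_def)
  have W0: "0 \<le> W" by (simp add: W_def)
  have cyx: "cinner (C y) x = cnj w"
    using adj unfolding is_adjoint_def w_def by (metis cinner_commute)
  have key: "0 \<le> P + 2 * t * W + t\<^sup>2 * W * Q" for t :: real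
  proof -
    define k where "k = complex_of_real t * cnj w"
    define v where "v = x + cscale k y"
    have e: "cinner (C v) v = cinner (C x) x + k * w + cnj k * cnj w + cnj k * k * cinner (C y) y"
      unfolding v_def using C
      by (simp add: bop_add bop_cscale cinner_add_left cinner_add_right cinner_cscale_left
          cinner_cscale_right cyx w_def[symmetric] algebra_simps)
    have e1: "k * w = complex_of_real (t * W)"
      unfolding k_def W_def by (simp add: complex_norm_square[symmetric] mult.commute)
    have e2: "cnj k * cnj w = complex_of_real (t * W)"
      using e1 by (metis complex_cnj_complex_of_real complex_cnj_mult)
    have e3: "cnj k * k = complex_of_real (t\<^sup>2 * W)"
    proof -
      have "cnj k * k = complex_of_real ((cmod k)\<^sup>2)" by (metis complex_norm_square mult.commute)
      also have "(cmod k)\<^sup>2 = t\<^sup>2 * W"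
        by (simp add: k_def W_def norm_mult power_mult_distrib)
      finally show ?thesis .
    qed
    have "0 \<le> Re (cinner (C v) v)" using pos by simp
    also have "Re (cinner (C v) v) = P + 2 * t * W + t\<^sup>2 * W * Q"
      unfolding e e1 e2 e3 P_def Q_def by simp
    finally show ?thesis .
  qed
  have "W \<le> P * Q"
  proof (cases "Q > 0")
    case True
    have "0 \<le> P + 2 * (-1/Q) * W + (-1/Q)\<^sup>2 * W * Q" by (rule key)
    then have "0 \<le> P - W / Q" using True by (simp add: power2_eq_square field_simps)
    then show ?thesis using True by (simp add: field_simps)
  next
    case False
    then have Q: "Q = 0" using Q0 by simp
    show ?thesis
    proof (rule ccontr)
      assume "\<not> W \<le> P * Q"
      then have Wp: "W > 0" using Q by simp
      have "0 \<le> P + 2 * (-(P+1)/(2*W)) * W + (-(P+1)/(2*W))\<^sup>2 * W * Q" by (rule key)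
      then have "0 \<le> P + (- (2 * P) - 2) / 2" using Wp Q by simp
      moreover have "(- (2 * P) - 2) / 2 = - P - 1" by simp
      ultimately show False by linarith
    qed
  qed
  then show ?thesis by (simp add: W_def P_def Q_def w_def)
qed

lemma id_bop: "bounded_op (\<lambda>x::'a::chilbert. x)"
  unfolding bounded_op_def by (auto intro: exI[of _ 1])

lemma cs: "cmod (cinner x y) \<le> norm x * norm y"
proof -
  have "(cmod (cinner x y))\<^sup>2 \<le> Re (cinner x x) * Re (cinner y y)"
    using gen_cs[of "\<lambda>x. x", OF id_bop] by (simp add: is_adjoint_def cinner_self_nonneg)
  also have "\<dots> = (norm x * norm y)\<^sup>2" by (simp add: norm_sq_cinner power_mult_distrib)
  finally show ?thesis by (rule power2_le_imp_le) simp
qed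


lemma pos_bound:
  assumes "positive_op C"
  shows "(norm (C x))\<^sup>2 \<le> onorm C * Re (cinner (C x) x)"
proof -
  have b: "bounded_op C" and adj: "is_adjoint C C" and pos: "\<forall>x. 0 \<le> Re (cinner (C x) x)"
    using assms by (auto simp: positive_op_def selfadjoint_op_def)
  define n where "n = norm (C x)"
  define P where "P = Re (cinner (C x) x)"
  define c where "c = onorm C"
  have c0: "0 \<le> c" using bop_onorm_nonneg[OF b] by (simp add: c_def)
  have P0: "0 \<le> P" using pos by (simp add: P_def)
  have "(cmod (cinner (C x) (C x)))\<^sup>2 \<le> P * Re (cinner (C (C x)) (C x))"
    using gen_cs[OF b adj pos, of x "C x"] by (simp add: P_def)
  moreover have "cmod (cinner (C x) (C x)) = n\<^sup>2"
    by (simp only: cinner_self norm_of_real n_def) simp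
  moreover have "Re (cinner (C (C x)) (C x)) \<le> c * n * n"
  proof -
    have "Re (cinner (C (C x)) (C x)) \<le> cmod (cinner (C (C x)) (C x))" by (rule complex_Re_le_cmod)
    also have "\<dots> \<le> norm (C (C x)) * n" unfolding n_def by (rule cs)
    also have "\<dots> \<le> (c * n) * n"
      by (rule mult_right_mono) (use bop_onorm[OF b, of "C x"] in \<open>simp_all add: c_def n_def\<close>)
    finally show ?thesis by simp
  qed
  ultimately have "(n\<^sup>2)\<^sup>2 \<le> P * (c * n * n)"
    by (metis P0 mult_left_mono order_trans)
  then have h: "n\<^sup>2 * n\<^sup>2 \<le> (c * P) * n\<^sup>2" by (simp add: power2_eq_square algebra_simps)
  have "n\<^sup>2 \<le> c * P"
  proof (cases "n = 0")
    case True then show ?thesis using c0 P0 by simp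
  next
    case False then have "0 < n\<^sup>2" by simp
    then show ?thesis using mult_right_le_imp_le[OF h] by blast
  qed
  then show ?thesis by (simp add: n_def c_def P_def)
qed

lemma shift_pos_bound:
  assumes "positive_op C"
  shows "norm (C x - scaleR (onorm C / 2) x) \<le> onorm C / 2 * norm x"
proof -
  have b: "bounded_op C" using assms by (auto simp: positive_op_def selfadjoint_op_def)
  have c0: "0 \<le> onorm C" by (rule bop_onorm_nonneg[OF b])
  have "(norm (C x - scaleR (onorm C / 2) x))\<^sup>2
      = (norm (C x))\<^sup>2 - onorm C * Re (cinner (C x) x) + (onorm C / 2)\<^sup>2 * (norm x)\<^sup>2"
    by (simp add: norm_sq_diff_scaleR)
  also have "\<dots> \<le> (onorm C / 2 * norm x)\<^sup>2"
  proof -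
    have e: "(onorm C / 2 * norm x)\<^sup>2 = (onorm C / 2)\<^sup>2 * (norm x)\<^sup>2" by (rule power_mult_distrib)
    show ?thesis unfolding e using pos_bound[OF assms, of x] by simp
  qed
  finally have sq: "(norm (C x - scaleR (onorm C / 2) x))\<^sup>2 \<le> (onorm C / 2 * norm x)\<^sup>2" .
  have nn: "0 \<le> onorm C / 2 * norm x" using c0 by simp
  show ?thesis using power2_le_imp_le[OF sq nn] .
qed

lemma adjoint_form:
  assumes adjS: "is_adjoint S S'" and A: "selfadjoint_op A" and C: "selfadjoint_op C"
    and S: "\<forall>x. S x = A x + cscale \<i> (C x)"
  shows "S' y = A y - cscale \<i> (C y)"
proof -
  have aA: "cinner (A u) v = cinner u (A v)" and aC: "cinner (C u) v = cinner u (C v)" for u v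
    using A C by (auto simp: selfadjoint_op_def is_adjoint_def)
  define d where "d = S' y - (A y - cscale \<i> (C y))"
  have "cinner d d = cinner d (S' y) - cinner d (A y - cscale \<i> (C y))"
    by (metis cinner_diff_right d_def)
  also have "cinner d (S' y) = cinner (S d) y" using adjS by (simp add: is_adjoint_def)
  also have "\<dots> = cinner d (A y) - \<i> * cinner d (C y)"
    using S by (simp add: cinner_add_left cinner_cscale_left aA aC)
  finally have "cinner d d = 0"
    by (simp add: cinner_diff_right cinner_cscale_right)
  then have "d = 0" by (simp add: cinner_self_eq_0)
  then show ?thesis unfolding d_def by (simp only: right_minus_eq)
qed


lemma normal_Im:
  assumes N: "normal_op S" and A: "selfadjoint_op A" and C: "selfadjoint_op C"
    and S: "\<forall>x. S x = A x + cscale \<i> (C x)"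
  shows "Im (cinner (A x) (C x)) = 0"
proof -
  obtain S' where adjS: "is_adjoint S S'" and comm: "S \<circ> S' = S' \<circ> S"
    using N by (auto simp: normal_op_def)
  have S'f: "S' y = A y + cscale (- \<i>) (C y)" for y
    using adjoint_form[OF adjS A C S, of y] by simp
  have adj2: "cinner (S' u) v = cinner u (S v)" for u v
    using adjS unfolding is_adjoint_def by (metis cinner_commute)
  have "Re (cinner (S x) (S x)) = Re (cinner x (S' (S x)))" using adjS by (simp add: is_adjoint_def)
  also have "S' (S x) = S (S' x)" using comm by (metis comp_apply)
  also have "Re (cinner x (S (S' x))) = Re (cinner (S' x) (S' x))" by (simp add: adj2)
  finally have "(norm (S x))\<^sup>2 = (norm (S' x))\<^sup>2" by (simp add: norm_sq_cinner)
  also have "(norm (S x))\<^sup>2 = (norm (A x))\<^sup>2 + (norm (C x))\<^sup>2 - 2 * Im (cinner (A x) (C x))"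
    using S by (simp add: norm_sq_add_cscale)
  also have "(norm (S' x))\<^sup>2 = (norm (A x))\<^sup>2 + (norm (C x))\<^sup>2 + 2 * Im (cinner (A x) (C x))"
    unfolding S'f norm_sq_add_cscale by simp
  finally show ?thesis by simp
qed

lemma shift_bound:
  assumes N: "normal_op S" and A: "selfadjoint_op A" and P: "positive_op C"
    and S: "\<forall>x. S x = A x + cscale \<i> (C x)"
  shows "norm (S x - cscale (\<i> * complex_of_real (onorm C / 2)) x)
           \<le> sqrt ((onorm A)\<^sup>2 + (onorm C / 2)\<^sup>2) * norm x"
proof -
  have C: "selfadjoint_op C" using P by (simp add: positive_op_def)
  have bA: "bounded_op A" using A by (simp add: selfadjoint_op_def)
  have aA: "cinner (A u) v = cinner u (A v)" for u v
    using A by (auto simp: selfadjoint_op_def is_adjoint_def)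
  define r where "r = onorm C / 2"
  define E where "E = C x - scaleR r x"
  have eq: "S x - cscale (\<i> * complex_of_real r) x = A x + cscale \<i> E"
    using S by (simp add: E_def scaleR_cscale cs.scale_right_diff_distrib cscale_cscale)
  have ImAx: "Im (cinner (A x) x) = 0"
    by (metis aA cinner_commute cnj.sel(2) neg_equal_zero)
  have ImE: "Im (cinner (A x) E) = 0"
    using normal_Im[OF N A C S, of x] ImAx by (simp add: E_def cinner_diff_right cinner_scaleR_right)
  have "(norm (S x - cscale (\<i> * complex_of_real r) x))\<^sup>2 = (norm (A x))\<^sup>2 + (norm E)\<^sup>2"
    unfolding eq by (simp add: norm_sq_add_cscale ImE)
  also have "\<dots> \<le> (onorm A * norm x)\<^sup>2 + (r * norm x)\<^sup>2"
  proof (rule add_mono)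
    show "(norm (A x))\<^sup>2 \<le> (onorm A * norm x)\<^sup>2"
      by (rule power_mono[OF bop_onorm[OF bA]]) simp
    show "(norm E)\<^sup>2 \<le> (r * norm x)\<^sup>2"
      by (rule power_mono) (use shift_pos_bound[OF P, of x] in \<open>simp_all add: E_def r_def\<close>)
  qed
  also have "\<dots> = ((onorm A)\<^sup>2 + r\<^sup>2) * (norm x)\<^sup>2" by (simp add: power_mult_distrib algebra_simps)
  finally have "norm (S x - cscale (\<i> * complex_of_real r) x) \<le> sqrt (((onorm A)\<^sup>2 + r\<^sup>2) * (norm x)\<^sup>2)"
    by (rule real_le_rsqrt)
  also have "\<dots> = sqrt ((onorm A)\<^sup>2 + r\<^sup>2) * norm x" by (simp add: real_sqrt_mult)
  finally show ?thesis by (simp add: r_def)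
qed


theorem mainTheorem2:
  fixes S T A B C D :: "'a::chilbert \<Rightarrow> 'a"
  assumes "separable_space TYPE('a)"
    and "normal_op S" and "normal_op T"
    and "selfadjoint_op A" and "selfadjoint_op C"
    and "selfadjoint_op B" and "selfadjoint_op D"
    and "\<forall>x. S x = A x + cscale \<i> (C x)"
    and "\<forall>x. T x = B x + cscale \<i> (D x)"
    and "positive_op C" and "positive_op D"
  shows "onorm (\<lambda>x. S (T x) - T (S x))
    \<le> 1/2 * sqrt (4 * (onorm A)\<^sup>2 + (onorm C)\<^sup>2) * sqrt (4 * (onorm B)\<^sup>2 + (onorm D)\<^sup>2)"
proof -
  have bS: "bounded_op S" and bT: "bounded_op T"
    using assms(2,3) by (auto simp: normal_op_def)
  define \<alpha> where "\<alpha> = \<i> * complex_of_real (onorm C / 2)"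
  define \<beta> where "\<beta> = \<i> * complex_of_real (onorm D / 2)"
  define n where "n = sqrt ((onorm A)\<^sup>2 + (onorm C / 2)\<^sup>2)"
  define m where "m = sqrt ((onorm B)\<^sup>2 + (onorm D / 2)\<^sup>2)"
  define N where "N = (\<lambda>y. S y - cscale \<alpha> y)"
  define M where "M = (\<lambda>y. T y - cscale \<beta> y)"
  have Nb: "norm (N y) \<le> n * norm y" for y
    unfolding N_def n_def \<alpha>_def by (rule shift_bound[OF assms(2,4,10,8)])
  have Mb: "norm (M y) \<le> m * norm y" for y
    unfolding M_def m_def \<beta>_def by (rule shift_bound[OF assms(3,6,11,9)])
  have n0: "0 \<le> n" and m0: "0 \<le> m" by (simp_all add: n_def m_def)
  have id: "S (T x) - T (S x) = N (M x) - M (N x)" for x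
  proof -
    have h1: "N (M x) = S (T x) - cscale \<beta> (S x) - cscale \<alpha> (T x) + cscale (\<alpha> * \<beta>) x"
      unfolding N_def M_def
      by (simp add: bop_diff[OF bS] bop_cscale[OF bS] cs.scale_right_diff_distrib)
    have h2: "M (N x) = T (S x) - cscale \<alpha> (T x) - cscale \<beta> (S x) + cscale (\<alpha> * \<beta>) x"
      unfolding N_def M_def
      by (simp add: bop_diff[OF bT] bop_cscale[OF bT] cs.scale_right_diff_distrib mult.commute)
    show ?thesis unfolding h1 h2 by (simp add: algebra_simps)
  qed
  have bound: "norm (S (T x) - T (S x)) \<le> (2 * n * m) * norm x" for x
  proof -
    have "norm (S (T x) - T (S x)) \<le> norm (N (M x)) + norm (M (N x))"
      unfolding id by (rule norm_triangle_ineq4)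
    also have "\<dots> \<le> n * (m * norm x) + m * (n * norm x)"
      by (rule add_mono; rule order_trans[OF Nb] order_trans[OF Mb];
          rule mult_left_mono; (rule Mb | rule Nb | rule n0 | rule m0))
    finally show ?thesis by (simp add: algebra_simps)
  qed
  have "onorm (\<lambda>x. S (T x) - T (S x)) \<le> 2 * n * m"
    by (rule onorm_bound) (use n0 m0 bound in auto)
  also have "2 * n * m
      = 1/2 * sqrt (4 * (onorm A)\<^sup>2 + (onorm C)\<^sup>2) * sqrt (4 * (onorm B)\<^sup>2 + (onorm D)\<^sup>2)"
  proof -
    have s4: "sqrt 4 = (2::real)" by (rule real_sqrt_unique) auto
    have ha: "(onorm A)\<^sup>2 + (onorm C / 2)\<^sup>2 = (4 * (onorm A)\<^sup>2 + (onorm C)\<^sup>2) / 4"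
      by (simp add: power_divide)
    have a: "n = sqrt (4 * (onorm A)\<^sup>2 + (onorm C)\<^sup>2) / 2"
      unfolding n_def ha real_sqrt_divide s4 ..
    have hb: "(onorm B)\<^sup>2 + (onorm D / 2)\<^sup>2 = (4 * (onorm B)\<^sup>2 + (onorm D)\<^sup>2) / 4"
      by (simp add: power_divide)
    have b: "m = sqrt (4 * (onorm B)\<^sup>2 + (onorm D)\<^sup>2) / 2"
      unfolding m_def hb real_sqrt_divide s4 ..
    show ?thesis unfolding a b by simp
  qed
  finally show ?thesis .
qed

end
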